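(* Let $\mu$ be a probability measure, $1<p\le 2$, and equip $L^1(\mu)$ with the Luxemburg norm $\|\cdot\|$ associated to the Orlicz function $M$ (defined in the context). Let $X$ be a closed subspace of $L^1(\mu)$ with $X\subset L^p(\mu)$ such that the norms $\|\cdot\|_p$ and $\|\cdot\|_1$ are equivalent on $X$. Then $(X,\|\cdot\|)$ has modulus of smoothness of power type $p$, i.e. there is $C>0$ with $\rho_X(\tau)\le C\tau^p$ for all $\tau>0$, and modulus of convexity of power type $2$.
   Context: Let $\varphi(t)=2$ for $0\le t\le 1$ and $\varphi(t)=8/(1+t)^2$ for $t>1$, and let $M(t)=\int_0^{|t|}\varphi(u)(|t|-u)\,du$ for $t\in\mathbb{R}$. The Luxemburg norm is $\|f\|=\inf\{\lambda>0:\int_\Omega M(f/\lambda)\,d\mu\le 1\}$. Moduli of $(X,\|\cdot\|)$: $\delta_X(\varepsilon)=\inf\{1-\|\tfrac{x+y}{2}\| : \|x\|=\|y\|=1,\ \|x-y\|=\varepsilon\}$ and $\rho_X(\tau)=\sup\{\tfrac{\|x+\tau y\|+\|x-\tau y\|}{2}-1 : \|x\|=\|y\|=1\}$, with $x,y\in X$. Power type 2 convexity means $\delta_X(\varepsilon)\ge c\varepsilon^2$ for some $c>0$. *)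

theory Defs
  imports "HOL-Analysis.Analysis" "HOL-Probability.Probability"
begin

definition phi :: "real \<Rightarrow> real" where
  "phi t = (if t \<le> 1 then 2 else 8 / (1 + t)\<^sup>2)"

definition orliczM :: "real \<Rightarrow> real" where
  "orliczM t = integral {0..\<bar>t\<bar>} (\<lambda>u. phi u * (\<bar>t\<bar> - u))"

definition lux :: "'a measure \<Rightarrow> ('a \<Rightarrow> real) \<Rightarrow> real" where
  "lux mu f = Inf {lam. lam > 0 \<and> (\<integral>\<^sup>+ x. ennreal (orliczM (f x / lam)) \<partial>mu) \<le> 1}"

text \<open>Modulus of convexity of (X, Luxemburg norm); infimum taken in ereal (Inf {} = \<infinity>).\<close>
definition mod_convexity :: "'a measure \<Rightarrow> ('a \<Rightarrow> real) set \<Rightarrow> real \<Rightarrow> ereal" where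
  "mod_convexity mu X eps = Inf {ereal (1 - lux mu (\<lambda>t. (x t + y t) / 2)) | x y.
      x \<in> X \<and> y \<in> X \<and> lux mu x = 1 \<and> lux mu y = 1 \<and> lux mu (\<lambda>t. x t - y t) = eps}"

text \<open>Modulus of smoothness of (X, Luxemburg norm); supremum taken in ereal (Sup {} = -\<infinity>).\<close>
definition mod_smoothness :: "'a measure \<Rightarrow> ('a \<Rightarrow> real) set \<Rightarrow> real \<Rightarrow> ereal" where
  "mod_smoothness mu X tau = Sup {ereal ((lux mu (\<lambda>t. x t + tau * y t) + lux mu (\<lambda>t. x t - tau * y t)) / 2 - 1) | x y.
      x \<in> X \<and> y \<in> X \<and> lux mu x = 1 \<and> lux mu y = 1}"

definition Lp_norm :: "'a measure \<Rightarrow> real \<Rightarrow> ('a \<Rightarrow> real) \<Rightarrow> real" where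
  "Lp_norm mu p f = (\<integral>x. \<bar>f x\<bar> powr p \<partial>mu) powr (1 / p)"

definition L1_norm :: "'a measure \<Rightarrow> ('a \<Rightarrow> real) \<Rightarrow> real" where
  "L1_norm mu f = (\<integral>x. \<bar>f x\<bar> \<partial>mu)"

text \<open>X is a linear subspace of L^1(mu) (functions as representatives).\<close>
definition L1_subspace :: "'a measure \<Rightarrow> ('a \<Rightarrow> real) set \<Rightarrow> bool" where
  "L1_subspace mu X \<longleftrightarrow> (\<forall>f\<in>X. integrable mu f) \<and> (\<lambda>x. 0) \<in> X \<and>
     (\<forall>f\<in>X. \<forall>g\<in>X. (\<lambda>x. f x + g x) \<in> X) \<and> (\<forall>c. \<forall>f\<in>X. (\<lambda>x. c * f x) \<in> X)"

definition L1_closed :: "'a measure \<Rightarrow> ('a \<Rightarrow> real) set \<Rightarrow> bool" where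
  "L1_closed mu X \<longleftrightarrow> (\<forall>fs f. (\<forall>n. fs n \<in> X) \<and> integrable mu f \<and>
      (\<lambda>n. L1_norm mu (\<lambda>x. fs n x - f x)) \<longlonglongrightarrow> 0 \<longrightarrow> f \<in> X)"

end

theory Submission
  imports Defs
begin

lemma deriv_glue:
  fixes f g h :: "real \<Rightarrow> real"
  assumes g: "(g has_field_derivative D) (at a)" and h: "(h has_field_derivative D) (at a)"
    and fa: "f a = g a" "f a = h a"
    and el: "eventually (\<lambda>x. f x = g x) (at_left a)"
    and er: "eventually (\<lambda>x. f x = h x) (at_right a)"
  shows "(f has_field_derivative D) (at a)"
proof -
  have G: "((\<lambda>y. (g y - g a) / (y - a)) \<longlongrightarrow> D) (at a)"
    using g by (simp add: has_field_derivative_iff)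
  have H: "((\<lambda>y. (h y - h a) / (y - a)) \<longlongrightarrow> D) (at a)"
    using h by (simp add: has_field_derivative_iff)
  have L: "((\<lambda>y. (f y - f a) / (y - a)) \<longlongrightarrow> D) (at_left a)"
  proof (rule Lim_transform_eventually[OF tendsto_within_subset[OF G]])
    show "eventually (\<lambda>y. (g y - g a) / (y - a) = (f y - f a) / (y - a)) (at_left a)"
      using el by eventually_elim (simp add: fa(1))
  qed simp
  have R: "((\<lambda>y. (f y - f a) / (y - a)) \<longlongrightarrow> D) (at_right a)"
  proof (rule Lim_transform_eventually[OF tendsto_within_subset[OF H]])
    show "eventually (\<lambda>y. (h y - h a) / (y - a) = (f y - f a) / (y - a)) (at_right a)"
      using er by eventually_elim (simp add: fa(2))
  qed simp
  show ?thesis using L R by (simp add: has_field_derivative_iff filterlim_at_split)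
qed

definition Mc :: "real \<Rightarrow> real" where
  "Mc t = (if \<bar>t\<bar> \<le> 1 then t\<^sup>2 else 6*\<bar>t\<bar> - 5 - 8*ln((1+\<bar>t\<bar>)/2))"

definition psi :: "real \<Rightarrow> real" where
  "psi t = (if \<bar>t\<bar> \<le> 1 then 2*t else sgn t * (6 - 8/(1+\<bar>t\<bar>)))"

lemma Mc_deriv: "(Mc has_real_derivative psi t) (at t)"
proof -
  consider "\<bar>t\<bar> < 1" | "t > 1" | "t < -1" | "t = 1" | "t = -1" by linarith
  then show ?thesis
  proof cases
    case 1
    have ev: "eventually (\<lambda>x. x \<in> {-1<..<1}) (nhds t)"
      using 1 by (intro eventually_nhds_in_open) auto
    have "((\<lambda>x. x\<^sup>2) has_real_derivative 2*t) (at t)"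
      by (auto intro!: derivative_eq_intros)
    moreover have "eventually (\<lambda>x. Mc x = x\<^sup>2) (nhds t)"
      using ev by eventually_elim (auto simp: Mc_def)
    ultimately show ?thesis using 1
      by (subst DERIV_cong_ev[of t t Mc "\<lambda>x. x\<^sup>2" "psi t" "2*t"]) (auto simp: psi_def)
  next
    case 2
    have ev: "eventually (\<lambda>x. x \<in> {1<..}) (nhds t)"
      using 2 by (intro eventually_nhds_in_open) auto
    have "((\<lambda>x. 6*x - 5 - 8*ln((1+x)/2)) has_real_derivative 6 - 8/(1+t)) (at t)"
      using 2 by (auto intro!: derivative_eq_intros simp: field_simps)
    moreover have "eventually (\<lambda>x. Mc x = 6*x - 5 - 8*ln((1+x)/2)) (nhds t)"
      using ev by eventually_elim (auto simp: Mc_def)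
    ultimately show ?thesis using 2
      by (subst DERIV_cong_ev[of t t Mc "\<lambda>x. 6*x - 5 - 8*ln((1+x)/2)" "psi t" "6 - 8/(1+t)"]) (auto simp: psi_def)
  next
    case 3
    have ev: "eventually (\<lambda>x. x \<in> {..<-1}) (nhds t)"
      using 3 by (intro eventually_nhds_in_open) auto
    have "((\<lambda>x. -6*x - 5 - 8*ln((1-x)/2)) has_real_derivative -(6 - 8/(1-t))) (at t)"
      using 3 by (auto intro!: derivative_eq_intros simp: field_simps)
    moreover have "eventually (\<lambda>x. Mc x = -6*x - 5 - 8*ln((1-x)/2)) (nhds t)"
      using ev by eventually_elim (auto simp: Mc_def)
    ultimately show ?thesis using 3
      by (subst DERIV_cong_ev[of t t Mc "\<lambda>x. -6*x - 5 - 8*ln((1-x)/2)" "psi t" "-(6 - 8/(1-t))"]) (auto simp: psi_def)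
  next
    case 4
    have g: "((\<lambda>x. x\<^sup>2) has_real_derivative 2) (at 1)"
      by (auto intro!: derivative_eq_intros)
    have h: "((\<lambda>x. 6*x - 5 - 8*ln((1+x)/2)) has_real_derivative 2) (at 1)"
      by (auto intro!: derivative_eq_intros simp: field_simps)
    have "eventually (\<lambda>x. x \<in> {0<..<1}) (at_left (1::real))"
      by (rule eventually_at_left_real) simp
    then have el: "eventually (\<lambda>x. Mc x = x\<^sup>2) (at_left 1)"
      by eventually_elim (auto simp: Mc_def)
    have "eventually (\<lambda>x. x \<in> {1<..<2}) (at_right (1::real))"
      by (rule eventually_at_right_real) simp
    then have er: "eventually (\<lambda>x. Mc x = 6*x - 5 - 8*ln((1+x)/2)) (at_right 1)"
      by eventually_elim (auto simp: Mc_def)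
    have "(Mc has_real_derivative 2) (at 1)"
      by (rule deriv_glue[OF g h _ _ el er]) (auto simp: Mc_def)
    then show ?thesis using 4 by (simp add: psi_def)
  next
    case 5
    have h: "((\<lambda>x. x\<^sup>2) has_real_derivative -2) (at (-1))"
      by (auto intro!: derivative_eq_intros)
    have g: "((\<lambda>x. -6*x - 5 - 8*ln((1-x)/2)) has_real_derivative -2) (at (-1))"
      by (auto intro!: derivative_eq_intros simp: field_simps)
    have "eventually (\<lambda>x. x \<in> {-1<..<0}) (at_right (-1::real))"
      by (rule eventually_at_right_real) simp
    then have er: "eventually (\<lambda>x. Mc x = x\<^sup>2) (at_right (-1))"
      by eventually_elim (auto simp: Mc_def)
    have "eventually (\<lambda>x. x \<in> {-2<..<-1}) (at_left (-1::real))"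
      by (rule eventually_at_left_real) simp
    then have el: "eventually (\<lambda>x. Mc x = -6*x - 5 - 8*ln((1-x)/2)) (at_left (-1))"
      by eventually_elim (auto simp: Mc_def)
    have "(Mc has_real_derivative -2) (at (-1))"
      by (rule deriv_glue[OF g h _ _ el er]) (auto simp: Mc_def)
    then show ?thesis using 5 by (simp add: psi_def)
  qed
qed

lemma orliczM_eq: "orliczM t = Mc t"
proof -
  define a where "a = \<bar>t\<bar>"
  have a0: "a \<ge> 0" by (simp add: a_def)
  have I1: "((\<lambda>u. phi u * (a - u)) has_integral (2*a*b - b\<^sup>2)) {0..b}" if "0 \<le> b" "b \<le> 1" for b
  proof -
    have "((\<lambda>u. 2*(a-u)) has_integral ((2*a*b - b\<^sup>2) - (2*a*0 - 0\<^sup>2))) {0..b}"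
    proof (rule fundamental_theorem_of_calculus[where f="\<lambda>u. 2*a*u - u\<^sup>2"])
      fix x assume "x \<in> {0..b}"
      have "((\<lambda>u. 2*a*u - u\<^sup>2) has_real_derivative (2*(a-x))) (at x)"
        by (auto intro!: derivative_eq_intros simp: algebra_simps)
      then show "((\<lambda>u. 2*a*u - u\<^sup>2) has_vector_derivative (2*(a-x))) (at x within {0..b})"
        by (simp add: has_real_derivative_iff_has_vector_derivative has_vector_derivative_at_within)
    qed (use that in simp)
    then show ?thesis using that
      by (subst has_integral_cong[where g="\<lambda>u. 2*(a-u)"]) (auto simp: phi_def)
  qed
  show ?thesis
  proof (cases "a \<le> 1")
    case True
    have "integral {0..a} (\<lambda>u. phi u * (a - u)) = a\<^sup>2"
      using I1[OF a0 True] by (simp add: integral_unique power2_eq_square)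
    then show ?thesis using True by (simp add: orliczM_def Mc_def a_def)
  next
    case False
    define F where "F u = -8*(a+1)/(1+u) - 8*ln(1+u)" for u
    have nz: "\<And>x. 1 \<le> x \<Longrightarrow> 1 + (x*x + x*2) \<noteq> (0::real)"
      by (smt (verit) mult_nonneg_nonneg)
    have Fd: "(F has_real_derivative 8*(a-u)/(1+u)\<^sup>2) (at u)" if u: "u \<ge> 1" for u
    proof -
      have "(F has_real_derivative (8*(a+1)/(1+u)\<^sup>2 - 8/(1+u))) (at u)"
        unfolding F_def using u by (auto intro!: derivative_eq_intros simp: power2_eq_square)
      moreover have "8*(a+1)/(1+u)\<^sup>2 - 8/(1+u) = 8*(a-u)/(1+u)\<^sup>2"
      proof -
        have e: "8/(1+u) = 8*(1+u)/(1+u)\<^sup>2" unfolding power2_eq_square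
          by (rule nonzero_mult_divide_mult_cancel_right[symmetric]) (use u in simp)
        show ?thesis unfolding e by (simp add: diff_divide_distrib[symmetric] algebra_simps)
      qed
      ultimately show ?thesis by simp
    qed
    have "((\<lambda>u. 8*(a-u)/(1+u)\<^sup>2) has_integral (F a - F 1)) {1..a}"
    proof (rule fundamental_theorem_of_calculus[where f=F])
      fix x assume "x \<in> {1..a}"
      then have "(F has_real_derivative 8*(a-x)/(1+x)\<^sup>2) (at x)" by (intro Fd) simp
      then show "(F has_vector_derivative (8*(a-x)/(1+x)\<^sup>2)) (at x within {1..a})"
        by (simp add: has_real_derivative_iff_has_vector_derivative has_vector_derivative_at_within)
    qed (use False in simp)
    then have I2: "((\<lambda>u. phi u * (a - u)) has_integral (F a - F 1)) {1..a}"
      by (subst has_integral_cong[where g="\<lambda>u. 8*(a-u)/(1+u)\<^sup>2"]) (auto simp: phi_def)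
    have "((\<lambda>u. phi u * (a - u)) has_integral ((2*a*1 - 1\<^sup>2) + (F a - F 1))) {0..a}"
      by (rule has_integral_combine[OF _ _ I1 I2]) (use False in auto)
    moreover have "(2*a*1 - 1\<^sup>2) + (F a - F 1) = 6*a - 5 - 8*ln((1+a)/2)"
      using False a0 by (simp add: F_def ln_div field_simps)
    ultimately have "integral {0..a} (\<lambda>u. phi u * (a - u)) = 6*a - 5 - 8*ln((1+a)/2)"
      by (simp add: integral_unique)
    then show ?thesis using False by (simp add: orliczM_def Mc_def a_def)
  qed
qed

lemma div_le_self_r: "0 \<le> x \<Longrightarrow> 1 \<le> d \<Longrightarrow> x/d \<le> (x::real)"
  by (simp add: divide_le_eq mult_le_cancel_left1 order_trans[of _ x] mult_le_cancel_left)

lemma psi_ge1: "1 \<le> t \<Longrightarrow> psi t = 6 - 8/(1+t)"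
  by (cases "t = 1") (auto simp: psi_def)

lemma psi_le1: "\<bar>t\<bar> \<le> 1 \<Longrightarrow> psi t = 2*t"
  by (simp add: psi_def)

lemma psi_odd: "psi (-t) = - psi t"
  by (simp add: psi_def)

lemma Mc_even: "Mc (-t) = Mc t"
  by (simp add: Mc_def)

lemma psi_pos_bounds:
  assumes u: "0 \<le> u" and uv: "u \<le> v"
  shows "2*(v-u)/(1+v)\<^sup>2 \<le> psi v - psi u \<and> psi v - psi u \<le> 2*(v-u)"
proof -
  have v0: "0 \<le> v" using u uv by simp
  have sq1: "1 \<le> (1+v)\<^sup>2" using mult_mono[of 1 "1+v" 1 "1+v"] v0 by (simp add: power2_eq_square)
  consider "v \<le> 1" | "1 \<le> u" | "u < 1" "1 < v" by linarith
  then show ?thesis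
  proof cases
    case 1
    then have "psi v - psi u = 2*(v-u)" using u uv by (simp add: psi_def)
    moreover have "2*(v-u)/(1+v)\<^sup>2 \<le> 2*(v-u)" using uv sq1 by (intro div_le_self_r) auto
    ultimately show ?thesis by simp
  next
    case 2
    have pu: "0 < 1+u" "0 < 1+v" using u v0 by auto
    have e: "psi v - psi u = (v-u) * (8/((1+u)*(1+v)))"
      using 2 uv pu by (simp add: psi_ge1 field_simps)
    have w4: "4 \<le> (1+u)*(1+v)" using 2 uv mult_mono[of 2 "1+u" 2 "1+v"] by auto
    have a: "2/(1+v)\<^sup>2 \<le> 8/((1+u)*(1+v))"
      by (rule frac_le) (use pu 2 uv in \<open>auto simp: power2_eq_square intro!: mult_right_mono\<close>)
    have b: "8/((1+u)*(1+v)) \<le> 2"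
      using w4 by (simp add: divide_le_eq)
    have "2*(v-u)/(1+v)\<^sup>2 = (v-u) * (2/(1+v)\<^sup>2)" by simp
    also have "\<dots> \<le> (v-u) * (8/((1+u)*(1+v)))" using a uv by (intro mult_left_mono) auto
    finally have "2*(v-u)/(1+v)\<^sup>2 \<le> psi v - psi u" using e by simp
    moreover have "(v-u) * (8/((1+u)*(1+v))) \<le> (v-u) * 2" using b uv by (intro mult_left_mono) auto
    ultimately show ?thesis using e by simp
  next
    case 3
    have pv: "0 < 1+v" using v0 by auto
    have e: "psi v - psi u = 6 - 8/(1+v) - 2*u" using 3 u by (simp add: psi_def)
    have e2: "6 - 8/(1+v) - 2*u = 4*(v-1)/(1+v) + 2*(1-u)" using pv by (simp add: field_simps)
    have a: "2/(1+v)\<^sup>2 \<le> 4/(1+v)"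
      by (rule frac_le) (use pv sq1 v0 in \<open>auto simp: power2_eq_square\<close>)
    have a2: "2*(v-1)/(1+v)\<^sup>2 \<le> 4*(v-1)/(1+v)"
      using mult_left_mono[OF a, of "v-1"] 3 by (simp add: algebra_simps)
    have b: "2*(1-u)/(1+v)\<^sup>2 \<le> 2*(1-u)" using 3 sq1 by (intro div_le_self_r) auto
    have "2*(v-u)/(1+v)\<^sup>2 = 2*(v-1)/(1+v)\<^sup>2 + 2*(1-u)/(1+v)\<^sup>2" by (simp add: add_divide_distrib[symmetric] algebra_simps)
    then have L: "2*(v-u)/(1+v)\<^sup>2 \<le> psi v - psi u" using a2 b e e2 by linarith
    have e3: "2*(v-u) - (6 - 8/(1+v) - 2*u) = 2*(v-1)\<^sup>2/(1+v)"
      using pv by (simp add: field_simps power2_eq_square)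
    have "0 \<le> 2*(v-1)\<^sup>2/(1+v)" using pv by simp
    then show ?thesis using L e e3 by linarith
  qed
qed

lemma psi0: "psi 0 = 0" by (simp add: psi_def)

lemma denom_mono: "0 \<le> (d::real) \<Longrightarrow> 0 \<le> a \<Longrightarrow> a \<le> w \<Longrightarrow> 2/(1+w)\<^sup>2 * d \<le> 2*d/(1+a)\<^sup>2"
proof -
  assume d: "0 \<le> d" and a: "0 \<le> a" "a \<le> w"
  have "(1+a)\<^sup>2 \<le> (1+w)\<^sup>2" using a mult_mono[of "1+a" "1+w" "1+a" "1+w"] by (simp add: power2_eq_square)
  then have "2/(1+w)\<^sup>2 \<le> 2/(1+a)\<^sup>2" using a by (intro frac_le) auto
  then have "2/(1+w)\<^sup>2 * d \<le> 2/(1+a)\<^sup>2 * d" using d by (intro mult_right_mono) auto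
  then show ?thesis by simp
qed

lemma psi_gen:
  assumes uv: "u \<le> v"
  shows "psi v - psi u \<le> 2*(v-u) \<and> (\<forall>w. -w \<le> u \<and> v \<le> w \<longrightarrow> 2/(1+w)\<^sup>2 * (v-u) \<le> psi v - psi u)"
proof -
  consider "0 \<le> u" | "v \<le> 0" | "u < 0" "0 < v" by linarith
  then show ?thesis
  proof cases
    case 1
    note pb = psi_pos_bounds[OF 1 uv]
    show ?thesis
    proof (intro conjI allI impI)
      fix w assume "-w \<le> u \<and> v \<le> w"
      then have "2/(1+w)\<^sup>2 * (v-u) \<le> 2*(v-u)/(1+v)\<^sup>2" using 1 uv by (intro denom_mono) auto
      then show "2/(1+w)\<^sup>2 * (v-u) \<le> psi v - psi u" using pb by linarith
    qed (use pb in auto)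
  next
    case 2
    have pb: "2*((-u)-(-v))/(1+(-u))\<^sup>2 \<le> psi (-u) - psi (-v) \<and> psi (-u) - psi (-v) \<le> 2*((-u)-(-v))"
      using 2 uv by (intro psi_pos_bounds) auto
    then have pb': "2*(v-u)/(1-u)\<^sup>2 \<le> psi v - psi u \<and> psi v - psi u \<le> 2*(v-u)"
      by (simp add: psi_odd)
    show ?thesis
    proof (intro conjI allI impI)
      fix w assume "-w \<le> u \<and> v \<le> w"
      then have "2/(1+w)\<^sup>2 * (v-u) \<le> 2*(v-u)/(1+(-u))\<^sup>2" using 2 uv by (intro denom_mono) auto
      then show "2/(1+w)\<^sup>2 * (v-u) \<le> psi v - psi u" using pb' by simp
    qed (use pb' in auto)
  next
    case 3
    have p1: "2*(v-0)/(1+v)\<^sup>2 \<le> psi v - psi 0 \<and> psi v - psi 0 \<le> 2*(v-0)"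
      using 3 by (intro psi_pos_bounds) auto
    have p2: "2*((-u)-0)/(1+(-u))\<^sup>2 \<le> psi (-u) - psi 0 \<and> psi (-u) - psi 0 \<le> 2*((-u)-0)"
      using 3 by (intro psi_pos_bounds) auto
    have e: "psi v - psi u = (psi v - psi 0) + (psi (-u) - psi 0)" by (simp add: psi_odd psi0)
    show ?thesis
    proof (intro conjI allI impI)
      fix w assume w: "-w \<le> u \<and> v \<le> w"
      have a: "2/(1+w)\<^sup>2 * v \<le> 2* v/(1+v)\<^sup>2" using 3 w by (intro denom_mono) auto
      have b: "2/(1+w)\<^sup>2 * (-u) \<le> 2*(-u)/(1+(-u))\<^sup>2" using 3 w by (intro denom_mono) auto
      have "2/(1+w)\<^sup>2 * (v-u) = 2/(1+w)\<^sup>2 * v + 2/(1+w)\<^sup>2 * (-u)"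
        using distrib_left[of "2/(1+w)\<^sup>2" v "-u"] by simp
      then show "2/(1+w)\<^sup>2 * (v-u) \<le> psi v - psi u" using a b p1 p2 e by simp
    qed (use p1 p2 e in auto)
  qed
qed

lemma psi_mono: "u \<le> v \<Longrightarrow> psi u \<le> psi v"
proof -
  assume uv: "u \<le> v"
  define w where "w = max \<bar>u\<bar> \<bar>v\<bar>"
  have "-w \<le> u \<and> v \<le> w" unfolding w_def by auto
  then have "2/(1+w)\<^sup>2 * (v-u) \<le> psi v - psi u" using psi_gen[OF uv] by blast
  moreover have "0 \<le> 2/(1+w)\<^sup>2 * (v-u)" using uv by simp
  ultimately show ?thesis by simp
qed

lemma psi_lip: "u \<le> v \<Longrightarrow> psi v - psi u \<le> 2*(v-u)"
  using psi_gen by blast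

lemma psi_strong: "-w \<le> u \<Longrightarrow> u \<le> v \<Longrightarrow> v \<le> w \<Longrightarrow> 2/(1+w)\<^sup>2 * (v-u) \<le> psi v - psi u"
  using psi_gen by blast

lemma psi_bound: "\<bar>psi t\<bar> \<le> 6"
proof (cases "\<bar>t\<bar> \<le> 1")
  case True then show ?thesis by (simp add: psi_def)
next
  case False
  then have "0 \<le> 6 - 8/(1+\<bar>t\<bar>)" "6 - 8/(1+\<bar>t\<bar>) \<le> 6" by (auto simp: field_simps)
  then show ?thesis using False by (auto simp: psi_def abs_mult abs_sgn_eq)
qed

lemma Mc_mvt: "a < b \<Longrightarrow> \<exists>z. a < z \<and> z < b \<and> Mc b - Mc a = (b-a) * psi z"
  using MVT2[of a b Mc psi] Mc_deriv by auto

lemma Mc0: "Mc 0 = 0" by (simp add: Mc_def)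

lemma Mc_abs: "Mc \<bar>t\<bar> = Mc t" by (simp add: Mc_def)

lemma Mc_lip: "\<bar>Mc a - Mc b\<bar> \<le> 6 * \<bar>a - b\<bar>"
proof -
  have *: "\<bar>Mc b - Mc a\<bar> \<le> 6 * \<bar>b - a\<bar>" if ab: "a < b" for a b
  proof -
    obtain z where "Mc b - Mc a = (b-a) * psi z" using Mc_mvt[OF ab] by blast
    then have "\<bar>Mc b - Mc a\<bar> = \<bar>b-a\<bar> * \<bar>psi z\<bar>" by (simp add: abs_mult)
    also have "\<dots> \<le> \<bar>b-a\<bar> * 6" using psi_bound[of z] by (intro mult_left_mono) auto
    finally show ?thesis by simp
  qed
  consider "a < b" | "a = b" | "b < a" by linarith
  then show ?thesis
  proof cases
    case 1 then show ?thesis using *[OF 1] by (simp add: abs_minus_commute)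
  next
    case 3 then show ?thesis using *[OF 3] by (simp add: abs_minus_commute)
  qed simp
qed

lemma Mc_le6: "Mc t \<le> 6 * \<bar>t\<bar>"
  using Mc_lip[of t 0] by (simp add: Mc0)

lemma Mc_ge_lin: "1 \<le> \<bar>t\<bar> \<Longrightarrow> 2*\<bar>t\<bar> - 1 \<le> Mc t"
proof -
  assume t: "1 \<le> \<bar>t\<bar>"
  show ?thesis
  proof (cases "\<bar>t\<bar> = 1")
    case True
    have "t\<^sup>2 = \<bar>t\<bar>\<^sup>2" by simp
    then show ?thesis using True by (simp add: Mc_def)
  next
    case False
    then have "1 < \<bar>t\<bar>" using t by simp
    then obtain z where z: "1 < z" "Mc \<bar>t\<bar> - Mc 1 = (\<bar>t\<bar> - 1) * psi z" using Mc_mvt by blast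
    have "psi 1 \<le> psi z" using z by (intro psi_mono) simp
    then have "2 \<le> psi z" by (simp add: psi_def)
    then have "(\<bar>t\<bar> - 1) * 2 \<le> (\<bar>t\<bar> - 1) * psi z" using t by (intro mult_left_mono) auto
    then show ?thesis using z Mc_abs[of t] by (simp add: Mc_def)
  qed
qed

lemma Mc_nonneg: "0 \<le> Mc t"
  using Mc_ge_lin[of t] by (cases "\<bar>t\<bar> \<le> 1") (auto simp: Mc_def)

lemma abs_le_Mc: "\<bar>t\<bar> \<le> Mc t + 1"
  using Mc_ge_lin[of t] Mc_nonneg[of t] by (cases "\<bar>t\<bar> \<le> 1") auto

lemma Mc_le_tpsi: "Mc t \<le> t * psi t"
proof -
  consider "0 < t" | "t = 0" | "t < 0" by linarith
  then show ?thesis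
  proof cases
    case 1
    then obtain z where z: "0 < z" "z < t" "Mc t - Mc 0 = (t - 0) * psi z" using Mc_mvt by blast
    have "t * psi z \<le> t * psi t" using z 1 by (intro mult_left_mono psi_mono) auto
    then show ?thesis using z by (simp add: Mc0)
  next
    case 3
    then obtain z where z: "t < z" "z < 0" "Mc 0 - Mc t = (0 - t) * psi z" using Mc_mvt by blast
    have "(-t) * psi t \<le> (-t) * psi z" using z 3 by (intro mult_left_mono psi_mono) auto
    then show ?thesis using z by (simp add: Mc0)
  qed (simp add: Mc0 psi0)
qed

lemma small_pow:
  assumes p: "1 < (p::real)" "p \<le> 2"
  shows "\<bar>k\<bar> * min (2*\<bar>k\<bar>) 12 \<le> 12 * \<bar>k\<bar> powr p"
proof (cases "\<bar>k\<bar> \<le> 1")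
  case True
  have "\<bar>k\<bar> powr 2 \<le> \<bar>k\<bar> powr p" using True p by (intro powr_mono') auto
  then have "\<bar>k\<bar>\<^sup>2 \<le> \<bar>k\<bar> powr p" by (cases "k = 0") (auto simp: powr_numeral)
  then have "\<bar>k\<bar> * (2*\<bar>k\<bar>) \<le> 12 * \<bar>k\<bar> powr p" by (simp add: power2_eq_square) (use powr_ge_zero[of "\<bar>k\<bar>" p] in linarith)
  moreover have "\<bar>k\<bar> * min (2*\<bar>k\<bar>) 12 \<le> \<bar>k\<bar> * (2*\<bar>k\<bar>)" by (intro mult_left_mono) auto
  ultimately show ?thesis by linarith
next
  case False
  have "\<bar>k\<bar> powr 1 \<le> \<bar>k\<bar> powr p" using False p by (intro powr_mono) auto
  then have "\<bar>k\<bar> \<le> \<bar>k\<bar> powr p" using False by simp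
  moreover have "\<bar>k\<bar> * min (2*\<bar>k\<bar>) 12 \<le> \<bar>k\<bar> * 12" by (intro mult_left_mono) auto
  ultimately show ?thesis by linarith
qed

lemma Mc_taylor:
  assumes p: "1 < p" "p \<le> 2"
  shows "Mc (a + k) \<le> Mc a + psi a * k + 12 * \<bar>k\<bar> powr p"
proof -
  have r: "Mc (a + k) - Mc a - psi a * k \<le> \<bar>k\<bar> * min (2*\<bar>k\<bar>) 12"
  proof -
    consider "0 < k" | "k = 0" | "k < 0" by linarith
    then show ?thesis
    proof cases
      case 1
      then obtain z where z: "a < z" "z < a + k" "Mc (a+k) - Mc a = (a + k - a) * psi z"
        using Mc_mvt[of a "a+k"] by auto
      have d1: "psi z - psi a \<le> 2*k" using psi_lip[of a z] z by auto
      have d2: "psi z - psi a \<le> 12" using psi_bound[of z] psi_bound[of a] by auto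
      have "Mc (a + k) - Mc a - psi a * k = k * (psi z - psi a)" using z by (simp add: algebra_simps)
      also have "\<dots> \<le> k * min (2*k) 12" using 1 d1 d2 by (intro mult_left_mono) auto
      finally show ?thesis using 1 by simp
    next
      case 3
      then obtain z where z: "a + k < z" "z < a" "Mc a - Mc (a+k) = (a - (a + k)) * psi z"
        using Mc_mvt[of "a+k" a] by auto
      have d1: "psi a - psi z \<le> 2*(-k)" using psi_lip[of z a] z by auto
      have d2: "psi a - psi z \<le> 12" using psi_bound[of z] psi_bound[of a] by auto
      have "Mc (a + k) - Mc a - psi a * k = (-k) * (psi a - psi z)" using z by (simp add: algebra_simps)
      also have "\<dots> \<le> (-k) * min (2*(-k)) 12" using 3 d1 d2 by (intro mult_left_mono) auto
      finally show ?thesis using 3 by simp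
    qed simp
  qed
  show ?thesis using r small_pow[OF p, of k] by linarith
qed

lemma Mc_mid:
  "Mc ((a+b)/2) \<le> (Mc a + Mc b)/2 - (a-b)\<^sup>2 / (4*(1 + max \<bar>a\<bar> \<bar>b\<bar>)\<^sup>2)"
proof -
  define w where "w = max \<bar>a\<bar> \<bar>b\<bar>"
  define m where "m = 2/(1+w)\<^sup>2"
  define G where "G t = Mc t - m * t\<^sup>2 / 2" for t
  have Gd: "(G has_real_derivative (psi x - m * x)) (at x)" for x
  proof -
    have d2: "((\<lambda>t. m * t\<^sup>2 / 2) has_real_derivative m * x) (at x)"
      by (auto intro!: derivative_eq_intros)
    show ?thesis unfolding G_def using DERIV_diff[OF Mc_deriv d2] by simp
  qed
  have key: "G ((a+b)/2) \<le> (G a + G b)/2" if ab: "a < b" "\<bar>a\<bar> \<le> w" "\<bar>b\<bar> \<le> w" for a b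
  proof -
    define c where "c = (a+b)/2"
    have ac: "a < c" "c < b" using ab by (auto simp: c_def)
    obtain z1 where z1: "c < z1" "z1 < b" "G b - G c = (b - c) * (psi z1 - m * z1)"
      using MVT2[of c b G "\<lambda>x. psi x - m * x"] Gd ac by auto
    obtain z2 where z2: "a < z2" "z2 < c" "G c - G a = (c - a) * (psi z2 - m * z2)"
      using MVT2[of a c G "\<lambda>x. psi x - m * x"] Gd ac by auto
    have "m * (z1 - z2) \<le> psi z1 - psi z2"
      unfolding m_def using psi_strong[of w z2 z1] z1 z2 ab ac by auto
    then have "psi z2 - m * z2 \<le> psi z1 - m * z1" by (simp add: algebra_simps)
    moreover have "b - c = c - a" by (simp add: c_def field_simps)
    ultimately have "G c - G a \<le> G b - G c"
      using z1 z2 ac by (metis diff_gt_0_iff_gt mult_left_mono order_less_imp_le)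
    then show ?thesis unfolding c_def by simp
  qed
  have G2: "G ((a+b)/2) \<le> (G a + G b)/2"
  proof -
    consider "a < b" | "a = b" | "b < a" by linarith
    then show ?thesis
    proof cases
      case 1 then show ?thesis using key[of a b] unfolding w_def by auto
    next
      case 3 then show ?thesis using key[of b a] unfolding w_def by (auto simp: add.commute)
    qed simp
  qed
  have "(a-b)\<^sup>2 / (4*(1 + w)\<^sup>2) = m * (a-b)\<^sup>2 / 8" unfolding m_def by simp
  moreover have "m * (a-b)\<^sup>2 / 8 = m * (a\<^sup>2 + b\<^sup>2) / 4 - m * ((a+b)/2)\<^sup>2 / 2"
    by (simp add: power2_eq_square field_simps)
  ultimately show ?thesis using G2 unfolding G_def w_def[symmetric] by (simp add: field_simps)
qed

definition Nr :: "'a measure \<Rightarrow> ('a \<Rightarrow> real) \<Rightarrow> real" where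
  "Nr mu g = (\<integral>x. Mc (g x) \<partial>mu)"

lemma Mc_meas[measurable]: "Mc \<in> borel_measurable borel"
  unfolding Mc_def[abs_def] by measurable

lemma psi_meas[measurable]: "psi \<in> borel_measurable borel"
  unfolding psi_def[abs_def] by measurable

lemma int_Mc: "integrable mu g \<Longrightarrow> integrable mu (\<lambda>x. Mc (g x))"
proof -
  assume g: "integrable mu g"
  then have gm: "g \<in> borel_measurable mu" by auto
  show ?thesis
  proof (rule Bochner_Integration.integrable_bound[where f="\<lambda>x. 6 * g x"])
    show "integrable mu (\<lambda>x. 6 * g x)" using g by auto
    show "(\<lambda>x. Mc (g x)) \<in> borel_measurable mu" using gm by measurable
    show "AE x in mu. norm (Mc (g x)) \<le> norm (6 * g x)"
      using Mc_le6 Mc_nonneg by (auto simp: abs_mult)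
  qed
qed

lemma int_psi_mult: "g \<in> borel_measurable mu \<Longrightarrow> integrable mu h \<Longrightarrow> integrable mu (\<lambda>x. psi (g x) * h x)"
proof -
  assume gm: "g \<in> borel_measurable mu" and h: "integrable mu h"
  show ?thesis
  proof (rule Bochner_Integration.integrable_bound[where f="\<lambda>x. 6 * h x"])
    show "integrable mu (\<lambda>x. 6 * h x)" using h by auto
    show "(\<lambda>x. psi (g x) * h x) \<in> borel_measurable mu" using gm h by measurable
    show "AE x in mu. norm (psi (g x) * h x) \<le> norm (6 * h x)"
      using psi_bound by (auto simp: abs_mult intro!: mult_right_mono)
  qed
qed

lemma nn_Nr: "integrable mu g \<Longrightarrow> (\<integral>\<^sup>+ x. ennreal (orliczM (g x)) \<partial>mu) = ennreal (Nr mu g)"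
  unfolding Nr_def orliczM_eq[abs_def]
  by (rule nn_integral_eq_integral) (auto intro: int_Mc Mc_nonneg)

lemma Nr_nonneg: "0 \<le> Nr mu g"
  unfolding Nr_def by (rule integral_nonneg_AE) (auto intro: Mc_nonneg)

lemma L1_nonneg: "0 \<le> L1_norm mu g"
  unfolding L1_norm_def by (rule integral_nonneg_AE) auto

lemma Nr_lip:
  assumes g: "integrable mu g" and h: "integrable mu h"
  shows "Nr mu g \<le> Nr mu h + 6 * L1_norm mu (\<lambda>x. g x - h x)"
proof -
  have "Nr mu g \<le> (\<integral>x. Mc (h x) + 6 * \<bar>g x - h x\<bar> \<partial>mu)"
    unfolding Nr_def
  proof (rule integral_mono)
    show "integrable mu (\<lambda>x. Mc (g x))" using g by (rule int_Mc)
    show "integrable mu (\<lambda>x. Mc (h x) + 6 * \<bar>g x - h x\<bar>)" using g h by (auto intro: int_Mc)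
    show "Mc (g x) \<le> Mc (h x) + 6 * \<bar>g x - h x\<bar>" for x using Mc_lip[of "g x" "h x"] by linarith
  qed
  also have "\<dots> = Nr mu h + 6 * L1_norm mu (\<lambda>x. g x - h x)"
    unfolding Nr_def L1_norm_def
    using g h by (subst Bochner_Integration.integral_add) (auto intro: int_Mc)
  finally show ?thesis .
qed

lemma L1_scale: "L1_norm mu (\<lambda>x. c * g x) = \<bar>c\<bar> * L1_norm mu g"
  unfolding L1_norm_def by (simp add: abs_mult)

lemma Nr_scale_lip:
  assumes g: "integrable mu g" and lam: "lam > 0"
  shows "Nr mu (\<lambda>x. g x / lam) \<le> Nr mu g + 6 * \<bar>1/lam - 1\<bar> * L1_norm mu g"
    and "Nr mu g \<le> Nr mu (\<lambda>x. g x / lam) + 6 * \<bar>1/lam - 1\<bar> * L1_norm mu g"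
proof -
  have e1: "(\<lambda>x. g x / lam - g x) = (\<lambda>x. (1/lam - 1) * g x)" by (auto simp: field_simps)
  have e2: "(\<lambda>x. g x - g x / lam) = (\<lambda>x. (1 - 1/lam) * g x)" by (auto simp: field_simps)
  have gi: "integrable mu (\<lambda>x. g x / lam)" using g by auto
  show "Nr mu (\<lambda>x. g x / lam) \<le> Nr mu g + 6 * \<bar>1/lam - 1\<bar> * L1_norm mu g"
    using Nr_lip[OF gi g] unfolding e1 L1_scale by simp
  show "Nr mu g \<le> Nr mu (\<lambda>x. g x / lam) + 6 * \<bar>1/lam - 1\<bar> * L1_norm mu g"
    using Nr_lip[OF g gi] unfolding e2 L1_scale by (simp add: abs_minus_commute)
qed

lemma Nr_le_L1:
  assumes g: "integrable mu g"
  shows "Nr mu g \<le> 6 * L1_norm mu g"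
  using Nr_lip[OF g, of "\<lambda>x. 0"] by (simp add: Nr_def Mc0)

definition Sset :: "'a measure \<Rightarrow> ('a \<Rightarrow> real) \<Rightarrow> real set" where
  "Sset mu f = {lam. lam > 0 \<and> (\<integral>\<^sup>+ x. ennreal (orliczM (f x / lam)) \<partial>mu) \<le> 1}"

lemma lux_Sset: "lux mu f = Inf (Sset mu f)"
  unfolding lux_def Sset_def ..

lemma Sset_iff:
  assumes g: "integrable mu g" and lam: "lam > 0"
  shows "lam \<in> Sset mu g \<longleftrightarrow> Nr mu (\<lambda>x. g x / lam) \<le> 1"
proof -
  have "integrable mu (\<lambda>x. g x / lam)" using g by auto
  from nn_Nr[OF this] show ?thesis using lam unfolding Sset_def by simp
qed

lemma Sset_ne:
  assumes g: "integrable mu g"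
  shows "6 * L1_norm mu g + 1 \<in> Sset mu g"
proof -
  define lam where "lam = 6 * L1_norm mu g + 1"
  have lam: "lam > 0" "6 * L1_norm mu g \<le> lam" using L1_nonneg[of mu g] by (auto simp: lam_def)
  have "Nr mu (\<lambda>x. g x / lam) \<le> 6 * L1_norm mu (\<lambda>x. g x / lam)"
    using g by (intro Nr_le_L1) auto
  also have "L1_norm mu (\<lambda>x. g x / lam) = L1_norm mu g / lam"
    using L1_scale[of mu "1/lam" g] lam by simp
  also have "6 * (L1_norm mu g / lam) \<le> 1" using lam by (simp add: divide_le_eq)
  finally show ?thesis using Sset_iff[OF g lam(1)] lam_def by simp
qed

lemma lux_le:
  assumes g: "integrable mu g" and lam: "lam > 0" and N: "Nr mu (\<lambda>x. g x / lam) \<le> 1"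
  shows "lux mu g \<le> lam"
  unfolding lux_Sset
proof (rule cInf_lower)
  show "lam \<in> Sset mu g" using Sset_iff[OF g lam] N by simp
  show "bdd_below (Sset mu g)" by (rule bdd_belowI[of _ 0]) (auto simp: Sset_def)
qed

lemma lux_nonneg:
  assumes g: "integrable mu g"
  shows "0 \<le> lux mu g"
  unfolding lux_Sset
  by (rule cInf_greatest) (use Sset_ne[OF g] in \<open>auto simp: Sset_def\<close>)

lemma lux_le_L1:
  assumes g: "integrable mu g"
  shows "lux mu g \<le> 6 * L1_norm mu g"
proof (rule field_le_epsilon)
  fix e :: real assume e: "0 < e"
  define lam where "lam = 6 * L1_norm mu g + e"
  have lam: "lam > 0" using e L1_nonneg[of mu g] by (simp add: lam_def)
  have "Nr mu (\<lambda>x. g x / lam) \<le> 6 * L1_norm mu (\<lambda>x. g x / lam)"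
    using g by (intro Nr_le_L1) auto
  also have "L1_norm mu (\<lambda>x. g x / lam) = L1_norm mu g / lam"
    using L1_scale[of mu "1/lam" g] lam by simp
  also have "6 * (L1_norm mu g / lam) \<le> 1" using lam e by (simp add: divide_le_eq lam_def)
  finally show "lux mu g \<le> 6 * L1_norm mu g + e" using lux_le[OF g lam] lam_def by simp
qed

lemma lux_one:
  assumes g: "integrable mu g" and l1: "lux mu g = 1"
  shows "Nr mu g = 1"
proof -
  define L where "L = L1_norm mu g"
  have L0: "0 \<le> L" using L1_nonneg unfolding L_def by blast
  have ne: "Sset mu g \<noteq> {}" using Sset_ne[OF g] by blast
  have bdd: "bdd_below (Sset mu g)" by (rule bdd_belowI[of _ 0]) (auto simp: Sset_def)
  have le: "Nr mu g \<le> 1"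
  proof (rule field_le_epsilon)
    fix e :: real assume e: "0 < e"
    define e' where "e' = e / (6*L + 1)"
    have e': "0 < e'" using e L0 by (simp add: e'_def)
    have "Inf (Sset mu g) < 1 + e'" using l1 e' by (simp add: lux_Sset)
    then obtain lam where lam: "lam \<in> Sset mu g" "lam < 1 + e'" using cInf_lessD[OF ne] by blast
    have lam1: "1 \<le> lam" using cInf_lower[OF lam(1) bdd] l1 by (simp add: lux_Sset)
    have lam0: "lam > 0" using lam1 by simp
    have N: "Nr mu (\<lambda>x. g x / lam) \<le> 1" using Sset_iff[OF g lam0] lam by simp
    have a: "\<bar>1/lam - 1\<bar> \<le> e'"
    proof -
      have "1/lam \<le> 1" using lam1 by simp
      moreover have "1 - 1/lam \<le> lam - 1"
      proof -
        have "1 - 1/lam = (lam - 1)/lam" using lam0 by (simp add: diff_divide_distrib)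
        also have "\<dots> \<le> lam - 1" using lam1 by (intro div_le_self_r) auto
        finally show ?thesis .
      qed
      ultimately show ?thesis using lam by simp
    qed
    have "Nr mu g \<le> 1 + 6 * e' * L"
      using Nr_scale_lip(2)[OF g lam0] N a L0 mult_right_mono[OF a L0] unfolding L_def by simp
    also have "6 * e' * L \<le> e"
    proof -
      have "6 * e' * L = e * (6*L/(6*L+1))" by (simp add: e'_def field_simps)
      also have "\<dots> \<le> e * 1" using e L0 by (intro mult_left_mono) auto
      finally show ?thesis by simp
    qed
    finally show "Nr mu g \<le> 1 + e" by simp
  qed
  have ge: "1 \<le> Nr mu g"
  proof (rule ccontr)
    assume "\<not> 1 \<le> Nr mu g"
    then have eta: "0 < 1 - Nr mu g" by simp
    define eta where "eta = 1 - Nr mu g"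
    define lam where "lam = 1 / (1 + eta / (6*L+1))"
    have q: "0 < eta/(6*L+1)" using eta L0 by (simp add: eta_def)
    have lam0: "lam > 0" unfolding lam_def using q by simp
    have lam1: "lam < 1" unfolding lam_def using q by (simp add: divide_less_eq)
    have il: "1/lam - 1 = eta / (6*L+1)" by (simp add: lam_def)
    have "Nr mu (\<lambda>x. g x / lam) \<le> Nr mu g + 6 * \<bar>1/lam - 1\<bar> * L"
      using Nr_scale_lip(1)[OF g lam0] unfolding L_def by simp
    also have "6 * \<bar>1/lam - 1\<bar> * L = eta * (6*L/(6*L+1))"
      using eta L0 unfolding il by (simp add: eta_def field_simps)
    also have "\<dots> \<le> eta * 1" using eta L0 by (intro mult_left_mono) (auto simp: eta_def)
    finally have "Nr mu (\<lambda>x. g x / lam) \<le> 1" by (simp add: eta_def)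
    then have "lux mu g \<le> lam" using lux_le[OF g lam0] by simp
    then show False using l1 lam1 by simp
  qed
  show ?thesis using le ge by simp
qed

lemma lux_small:
  assumes g: "integrable mu g" and N: "Nr mu g \<le> 1 - eta" and eta: "0 \<le> eta" "eta \<le> 12"
    and L: "L1_norm mu g \<le> 2"
  shows "lux mu g \<le> 1 - eta/24"
proof -
  define lam where "lam = 1 / (1 + eta/12)"
  have lam0: "lam > 0" using eta by (simp add: lam_def)
  have il: "\<bar>1/lam - 1\<bar> = eta/12" using eta by (simp add: lam_def)
  have "Nr mu (\<lambda>x. g x / lam) \<le> Nr mu g + 6 * \<bar>1/lam - 1\<bar> * L1_norm mu g"
    using Nr_scale_lip(1)[OF g lam0] by simp
  also have "\<dots> \<le> 1 - eta + 6 * (eta/12) * 2"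
    using N L eta unfolding il by (intro add_mono mult_left_mono) auto
  finally have "lux mu g \<le> lam" using lux_le[OF g lam0] by simp
  also have "lam \<le> 1 - eta/24"
  proof -
    have e1: "(1 - eta/24) * (1 + eta/12) = 1 + eta*(12-eta)/288" by (simp add: field_simps algebra_simps)
    have "0 \<le> eta*(12-eta)" using eta by simp
    then have "1 \<le> (1 - eta/24) * (1 + eta/12)" unfolding e1 by simp
    then show ?thesis using eta by (simp add: lam_def divide_le_eq)
  qed
  finally show ?thesis .
qed

lemma young_pow:
  assumes p: "1 < (p::real)" and s: "0 < s"
  shows "\<bar>d\<bar> \<le> s + \<bar>d\<bar> powr p / s powr (p-1)"
proof (cases "\<bar>d\<bar> \<le> s")
  case True
  have "0 \<le> \<bar>d\<bar> powr p / s powr (p-1)" by simp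
  then show ?thesis using True by linarith
next
  case False
  have "s powr (p-1) \<le> \<bar>d\<bar> powr (p-1)" using False s p by (intro powr_mono2) auto
  then have "\<bar>d\<bar> * s powr (p-1) \<le> \<bar>d\<bar> * \<bar>d\<bar> powr (p-1)" by (intro mult_left_mono) auto
  also have "\<bar>d\<bar> * \<bar>d\<bar> powr (p-1) = \<bar>d\<bar> powr p"
    using powr_add[of "\<bar>d\<bar>" 1 "p-1"] by simp
  finally have "\<bar>d\<bar> \<le> \<bar>d\<bar> powr p / s powr (p-1)" using s by (simp add: le_divide_eq)
  then show ?thesis using s by linarith
qed

lemma Lp_bound:
  assumes p: "1 < (p::real)" and I: "0 \<le> I" and le: "I powr (1/p) \<le> c"
  shows "I \<le> c powr p"
proof -
  have "I = (I powr (1/p)) powr p" using p I by (simp add: powr_powr powr_one)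
  also have "\<dots> \<le> c powr p" using le p by (intro powr_mono2) auto
  finally show ?thesis .
qed

lemma L1_le_2:
  assumes mu: "prob_space mu" and g: "integrable mu g" and N: "Nr mu g = 1"
  shows "L1_norm mu g \<le> 2"
proof -
  have "L1_norm mu g \<le> (\<integral>x. Mc (g x) + 1 \<partial>mu)"
    unfolding L1_norm_def using g mu
    by (intro integral_mono) (auto intro!: int_Mc finite_measure.integrable_const prob_space.finite_measure abs_le_Mc)
  also have "\<dots> = Nr mu g + 1"
    using g mu unfolding Nr_def
    by (subst Bochner_Integration.integral_add) (auto intro!: int_Mc finite_measure.integrable_const prob_space.finite_measure
        simp: prob_space.prob_space)
  finally show ?thesis using N by simp
qed

lemma convexity_core:
  assumes mu: "prob_space mu" and p: "1 < p" "p \<le> 2" and B: "0 < B"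
    and x: "integrable mu x" and y: "integrable mu y"
    and lx: "lux mu x = 1" and ly: "lux mu y = 1"
    and dp: "integrable mu (\<lambda>t. \<bar>x t - y t\<bar> powr p)"
    and dLp: "Lp_norm mu p (\<lambda>t. x t - y t) \<le> B * L1_norm mu (\<lambda>t. x t - y t)"
  defines "alpha \<equiv> (4 * B powr p) powr (1/(p-1))"
  defines "K \<equiv> 16 * alpha"
  shows "(lux mu (\<lambda>t. x t - y t))\<^sup>2 / (13824 * (1+K)\<^sup>2) \<le> 1 - lux mu (\<lambda>t. (x t + y t)/2)"
proof -
  interpret P: prob_space mu by (rule mu)
  define d where "d t = x t - y t" for t
  define g where "g t = (x t + y t)/2" for t
  define w where "w t = max \<bar>x t\<bar> \<bar>y t\<bar>" for t
  define D1 where "D1 = L1_norm mu d"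
  define eps where "eps = lux mu d"
  have di: "integrable mu d" unfolding d_def using x y by auto
  have gi: "integrable mu g" unfolding g_def using x y by auto
  have xm: "x \<in> borel_measurable mu" "y \<in> borel_measurable mu" using x y by auto
  have Nx: "Nr mu x = 1" by (rule lux_one[OF x lx])
  have Ny: "Nr mu y = 1" by (rule lux_one[OF y ly])
  have L1x: "L1_norm mu x \<le> 2" by (rule L1_le_2[OF mu x Nx])
  have L1y: "L1_norm mu y \<le> 2" by (rule L1_le_2[OF mu y Ny])
  have eps0: "0 \<le> eps" unfolding eps_def by (rule lux_nonneg[OF di])
  have epsD: "eps \<le> 6 * D1" unfolding eps_def D1_def by (rule lux_le_L1[OF di])
  have D10: "0 \<le> D1" unfolding D1_def by (rule L1_nonneg)
  define Q where "Q = (\<integral>t. (d t)\<^sup>2 / (1 + w t)\<^sup>2 \<partial>mu)"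
  have Qi: "integrable mu (\<lambda>t. (d t)\<^sup>2 / (1 + w t)\<^sup>2)"
  proof (rule Bochner_Integration.integrable_bound[where f="\<lambda>t. 2 * d t"])
    show "integrable mu (\<lambda>t. 2 * d t)" using di by auto
    show "(\<lambda>t. (d t)\<^sup>2 / (1 + w t)\<^sup>2) \<in> borel_measurable mu"
      unfolding d_def w_def using xm by measurable
    show "AE t in mu. norm ((d t)\<^sup>2 / (1 + w t)\<^sup>2) \<le> norm (2 * d t)"
    proof (intro AE_I2)
      fix t
      have w0: "0 \<le> w t" by (simp add: w_def)
      have dw: "\<bar>d t\<bar> \<le> 2 * (1 + w t)" unfolding d_def w_def by auto
      have "(d t)\<^sup>2 / (1 + w t)\<^sup>2 = \<bar>d t\<bar> * (\<bar>d t\<bar> / (1 + w t)) / (1 + w t)"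
        by (simp add: power2_eq_square)
      also have "\<dots> \<le> \<bar>d t\<bar> * (\<bar>d t\<bar> / (1 + w t))" using w0 by (intro div_le_self_r) auto
      also have "\<dots> \<le> \<bar>d t\<bar> * 2" using dw w0 by (intro mult_left_mono) (auto simp: divide_le_eq)
      finally show "norm ((d t)\<^sup>2 / (1 + w t)\<^sup>2) \<le> norm (2 * d t)" by (simp add: abs_mult)
    qed
  qed
  have Q0: "0 \<le> Q" unfolding Q_def by (rule integral_nonneg_AE) auto
  have e4: "(\<lambda>t. (d t)\<^sup>2 / (4*(1 + w t)\<^sup>2)) = (\<lambda>t. (d t)\<^sup>2 / (1 + w t)\<^sup>2 / 4)"
    by (simp add: field_simps)
  have Qi4: "integrable mu (\<lambda>t. (d t)\<^sup>2 / (4*(1 + w t)\<^sup>2))"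
    unfolding e4 using Qi by (rule integrable_divide_zero)
  have IQ4: "(\<integral>t. (d t)\<^sup>2 / (4*(1 + w t)\<^sup>2) \<partial>mu) = Q/4"
    unfolding e4 Q_def by (rule integral_divide_zero)
  have Ng: "Nr mu g \<le> 1 - Q/4"
  proof -
    have "Nr mu g \<le> (\<integral>t. (Mc (x t) + Mc (y t))/2 - (d t)\<^sup>2 / (4*(1 + w t)\<^sup>2) \<partial>mu)"
      unfolding Nr_def
    proof (rule integral_mono)
      show "integrable mu (\<lambda>t. Mc (g t))" by (rule int_Mc[OF gi])
      show "integrable mu (\<lambda>t. (Mc (x t) + Mc (y t))/2 - (d t)\<^sup>2 / (4*(1 + w t)\<^sup>2))"
        by (intro Bochner_Integration.integrable_diff integrable_divide_zero Bochner_Integration.integrable_add int_Mc x y Qi4)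
      show "Mc (g t) \<le> (Mc (x t) + Mc (y t))/2 - (d t)\<^sup>2 / (4*(1 + w t)\<^sup>2)" for t
        using Mc_mid[of "x t" "y t"] unfolding g_def d_def w_def by simp
    qed
    also have "\<dots> = (Nr mu x + Nr mu y)/2 - Q/4"
      unfolding Nr_def using Qi4 x y IQ4 int_Mc[OF x] int_Mc[OF y]
      by (subst Bochner_Integration.integral_diff) auto
    finally show ?thesis using Nx Ny by simp
  qed
  have L1g: "L1_norm mu g \<le> 2"
  proof -
    have "L1_norm mu g \<le> (\<integral>t. (\<bar>x t\<bar> + \<bar>y t\<bar>)/2 \<partial>mu)"
      unfolding L1_norm_def g_def using x y by (intro integral_mono) auto
    also have "\<dots> = (L1_norm mu x + L1_norm mu y)/2"
      unfolding L1_norm_def using x y by simp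
    finally show ?thesis using L1x L1y by simp
  qed
  show ?thesis
  proof (cases "D1 = 0")
    case True
    then have "eps = 0" using eps0 epsD by simp
    moreover have "lux mu g \<le> 1 - Q/4/24"
      using lux_small[OF gi Ng _ _ L1g] Q0 Nr_nonneg[of mu g] Ng by simp
    ultimately show ?thesis using Q0 unfolding eps_def d_def g_def by simp
  next
    case False
    then have D1p: "0 < D1" using D10 by simp
    have Bp: "0 < B powr p" using B by simp
    have alpha0: "0 < alpha" unfolding alpha_def using Bp by simp
    have K0: "0 < K" unfolding K_def using alpha0 by simp
    have alpha_p: "alpha powr (p-1) = 4 * B powr p"
      unfolding alpha_def using p Bp by (simp add: powr_powr)
    define s where "s = alpha * D1"
    have s0: "0 < s" unfolding s_def using alpha0 D1p by simp
    define R where "R t = (D1 * \<bar>d t\<bar> - D1\<^sup>2/4 - D1 * s / K * \<bar>x t\<bar> - D1 * s / K * \<bar>y t\<bar>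
        - D1 / s powr (p-1) * \<bar>d t\<bar> powr p) / (1+K)\<^sup>2" for t
    have Rle: "R t \<le> (d t)\<^sup>2 / (1 + w t)\<^sup>2" for t
    proof (cases "w t \<le> K")
      case True
      have w0: "0 \<le> w t" by (simp add: w_def)
      have nn: "0 \<le> D1 * s / K * \<bar>x t\<bar> + D1 * s / K * \<bar>y t\<bar> + D1 / s powr (p-1) * \<bar>d t\<bar> powr p"
        using D10 s0 K0 by simp
      have sq: "D1 * \<bar>d t\<bar> - D1\<^sup>2/4 \<le> (d t)\<^sup>2"
      proof -
        have "0 \<le> (\<bar>d t\<bar> - D1/2)\<^sup>2" by simp
        then show ?thesis by (simp add: power2_eq_square algebra_simps)
      qed
      have "R t \<le> (d t)\<^sup>2 / (1+K)\<^sup>2"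
        unfolding R_def using nn sq by (intro divide_right_mono) auto
      also have "\<dots> \<le> (d t)\<^sup>2 / (1 + w t)\<^sup>2"
      proof (rule divide_left_mono)
        show "(1 + w t)\<^sup>2 \<le> (1 + K)\<^sup>2" using True w0 by (intro power_mono) auto
        show "0 < (1 + K)\<^sup>2 * (1 + w t)\<^sup>2" using w0 K0 by simp
      qed simp
      finally show ?thesis .
    next
      case False
      have wx: "w t \<le> \<bar>x t\<bar> + \<bar>y t\<bar>" by (simp add: w_def)
      have "1 \<le> (\<bar>x t\<bar> + \<bar>y t\<bar>) / K" using False wx K0 by (simp add: le_divide_eq)
      then have "s \<le> s * ((\<bar>x t\<bar> + \<bar>y t\<bar>) / K)" using s0 mult_left_mono[of 1 "(\<bar>x t\<bar> + \<bar>y t\<bar>) / K" s] by simp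
      moreover have "\<bar>d t\<bar> \<le> s + \<bar>d t\<bar> powr p / s powr (p-1)" by (rule young_pow[OF p(1) s0])
      ultimately have "\<bar>d t\<bar> \<le> s * ((\<bar>x t\<bar> + \<bar>y t\<bar>) / K) + \<bar>d t\<bar> powr p / s powr (p-1)" by linarith
      then have "D1 * \<bar>d t\<bar> \<le> D1 * (s * ((\<bar>x t\<bar> + \<bar>y t\<bar>) / K) + \<bar>d t\<bar> powr p / s powr (p-1))"
        using D10 by (intro mult_left_mono) auto
      also have "\<dots> = D1 * s / K * \<bar>x t\<bar> + D1 * s / K * \<bar>y t\<bar> + D1 / s powr (p-1) * \<bar>d t\<bar> powr p"
        by (simp add: field_simps add_divide_distrib)
      finally have num: "D1 * \<bar>d t\<bar> - D1\<^sup>2/4 - D1 * s / K * \<bar>x t\<bar> - D1 * s / K * \<bar>y t\<bar>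
        - D1 / s powr (p-1) * \<bar>d t\<bar> powr p \<le> 0" using zero_le_power2[of D1]
        by linarith
      have "R t \<le> 0" unfolding R_def using num by (intro divide_nonpos_nonneg) auto
      also have "0 \<le> (d t)\<^sup>2 / (1 + w t)\<^sup>2" by simp
      finally show ?thesis .
    qed
    have dpi: "integrable mu (\<lambda>t. \<bar>d t\<bar> powr p)" using dp unfolding d_def by simp
    have Ri: "integrable mu R" unfolding R_def using di x y dpi by auto
    have IntR: "(\<integral>t. R t \<partial>mu) = (D1 * D1 - D1\<^sup>2/4 - D1 * s / K * L1_norm mu x - D1 * s / K * L1_norm mu y
        - D1 / s powr (p-1) * (\<integral>t. \<bar>d t\<bar> powr p \<partial>mu)) / (1+K)\<^sup>2"
      unfolding R_def L1_norm_def D1_def using di x y dpi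
      by (simp add: P.prob_space)
    have Ip: "(\<integral>t. \<bar>d t\<bar> powr p \<partial>mu) \<le> (B * D1) powr p"
    proof (rule Lp_bound[OF p(1)])
      show "0 \<le> (\<integral>t. \<bar>d t\<bar> powr p \<partial>mu)" by (rule integral_nonneg_AE) auto
      show "(\<integral>t. \<bar>d t\<bar> powr p \<partial>mu) powr (1/p) \<le> B * D1"
        using dLp unfolding Lp_norm_def D1_def d_def by simp
    qed
    have T3: "D1 / s powr (p-1) * (\<integral>t. \<bar>d t\<bar> powr p \<partial>mu) \<le> D1\<^sup>2/4"
    proof -
      have sp: "s powr (p-1) = 4 * B powr p * D1 powr (p-1)"
        unfolding s_def by (simp add: powr_mult alpha_p)
      have "D1 / s powr (p-1) * (\<integral>t. \<bar>d t\<bar> powr p \<partial>mu) \<le> D1 / s powr (p-1) * (B * D1) powr p"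
        using Ip D10 s0 by (intro mult_left_mono) auto
      also have "(B * D1) powr p = B powr p * D1 * D1 powr (p-1)"
        using powr_add[of D1 1 "p-1"] D10 by (simp add: powr_mult)
      also have "D1 / s powr (p-1) * (B powr p * D1 * D1 powr (p-1)) =
          D1 / (4 * B powr p * D1 powr (p-1)) * (B powr p * D1 * D1 powr (p-1))"
        unfolding sp ..
      also have "D1 / (4 * B powr p * D1 powr (p-1)) * (B powr p * D1 * D1 powr (p-1)) = D1\<^sup>2/4"
        using Bp D1p by (simp add: field_simps power2_eq_square)
      finally show ?thesis .
    qed
    have T2: "D1 * s / K * L1_norm mu x + D1 * s / K * L1_norm mu y \<le> D1\<^sup>2/4"
    proof -
      have "D1 * s / K * L1_norm mu x + D1 * s / K * L1_norm mu y = D1 * s / K * (L1_norm mu x + L1_norm mu y)"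
        by (simp add: algebra_simps)
      also have "\<dots> \<le> D1 * s / K * 4" using L1x L1y D10 s0 K0 by (intro mult_left_mono) auto
      also have "\<dots> = D1\<^sup>2/4" unfolding s_def K_def using alpha0 by (simp add: power2_eq_square field_simps)
      finally show ?thesis .
    qed
    have QR: "D1\<^sup>2 / (4*(1+K)\<^sup>2) \<le> Q"
    proof -
      have "D1\<^sup>2 / (4*(1+K)\<^sup>2) \<le> (\<integral>t. R t \<partial>mu)"
        unfolding IntR using T2 T3 K0 by (intro divide_right_mono[of "D1\<^sup>2/4" _ "(1+K)\<^sup>2", simplified]) (auto simp: power2_eq_square)
      also have "\<dots> \<le> Q" unfolding Q_def using Ri Qi Rle by (intro integral_mono) auto
      finally show ?thesis .
    qed
    define eta where "eta = Q/4"
    have eta1: "eta \<le> 1" using Ng Nr_nonneg[of mu g] unfolding eta_def by simp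
    have "lux mu g \<le> 1 - eta/24" using lux_small[OF gi _ _ _ L1g, of eta] Ng eta1 Q0 unfolding eta_def by simp
    moreover have "eps\<^sup>2 / (13824 * (1+K)\<^sup>2) \<le> eta/24"
    proof -
      have "eps\<^sup>2 \<le> (6*D1)\<^sup>2" using eps0 epsD by (intro power_mono) auto
      then have "eps\<^sup>2 / (13824 * (1+K)\<^sup>2) \<le> (6*D1)\<^sup>2 / (13824 * (1+K)\<^sup>2)"
        by (intro divide_right_mono) auto
      also have "\<dots> = D1\<^sup>2 / (4*(1+K)\<^sup>2) / 96"
      proof -
        have gen: "\<And>X::real. X \<noteq> 0 \<Longrightarrow> (6*D1)\<^sup>2 / (13824 * X) = D1\<^sup>2 / (4*X) / 96"
          by (simp add: field_simps power2_eq_square)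
        show ?thesis by (rule gen) (use K0 in simp)
      qed
      also have "\<dots> \<le> Q / 96" using QR by (intro divide_right_mono) auto
      finally show ?thesis unfolding eta_def by simp
    qed
    ultimately show ?thesis unfolding eps_def d_def g_def by simp
  qed
qed

lemma pow_sum:
  assumes p: "1 < (p::real)" "p \<le> 2" and a: "0 \<le> a" and b: "0 \<le> b" and k: "\<bar>k\<bar> \<le> 2*(a+b)"
  shows "\<bar>k\<bar> powr p \<le> 16 * (a powr p + b powr p)"
proof -
  define m where "m = max a b"
  have m0: "0 \<le> m" using a by (simp add: m_def)
  have "\<bar>k\<bar> \<le> 4*m" using k a b by (simp add: m_def)
  then have "\<bar>k\<bar> powr p \<le> (4*m) powr p" using p by (intro powr_mono2) auto
  also have "\<dots> = 4 powr p * m powr p" using m0 by (simp add: powr_mult)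
  also have "4 powr p \<le> (4::real) powr 2" using p by (intro powr_mono) auto
  then have "4 powr p \<le> 16" by simp
  then have "4 powr p * m powr p \<le> 16 * m powr p" by (intro mult_right_mono) auto
  also have "m powr p \<le> a powr p + b powr p" by (simp add: m_def max_def)
  finally show ?thesis by simp
qed

lemma smooth_core:
  assumes mu: "prob_space mu" and p: "1 < p" "p \<le> 2"
    and x: "integrable mu x" and y: "integrable mu y"
    and lx: "lux mu x = 1" and ly: "lux mu y = 1"
    and xp: "integrable mu (\<lambda>t. \<bar>x t\<bar> powr p)" and yp: "integrable mu (\<lambda>t. \<bar>y t\<bar> powr p)"
    and Px: "(\<integral>t. \<bar>x t\<bar> powr p \<partial>mu) \<le> P" and Py: "(\<integral>t. \<bar>y t\<bar> powr p \<partial>mu) \<le> P"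
  defines "E \<equiv> 65280 * P + 1"
  defines "tau0 \<equiv> min (1/26) ((1/E) powr (1/(p-1)))"
  assumes c: "\<bar>c\<bar> \<le> tau0"
  shows "lux mu (\<lambda>t. x t + c * y t) \<le> 1 + c * (\<integral>t. psi (x t) * y t \<partial>mu) / (\<integral>t. psi (x t) * x t \<partial>mu)
           + E * \<bar>c\<bar> powr p"
proof -
  interpret PS: prob_space mu by (rule mu)
  define l where "l = (\<integral>t. psi (x t) * y t \<partial>mu)"
  define kap where "kap = (\<integral>t. psi (x t) * x t \<partial>mu)"
  have xm: "x \<in> borel_measurable mu" "y \<in> borel_measurable mu" using x y by auto
  have Nx: "Nr mu x = 1" by (rule lux_one[OF x lx])
  have Ny: "Nr mu y = 1" by (rule lux_one[OF y ly])
  have L1x: "L1_norm mu x \<le> 2" by (rule L1_le_2[OF mu x Nx])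
  have L1y: "L1_norm mu y \<le> 2" by (rule L1_le_2[OF mu y Ny])
  have "0 \<le> (\<integral>t. \<bar>x t\<bar> powr p \<partial>mu)" by (rule integral_nonneg_AE) auto
  then have P0: "0 \<le> P" using Px by linarith
  have E1: "1 \<le> E" unfolding E_def using P0 by simp
  have pxx: "integrable mu (\<lambda>t. psi (x t) * x t)" by (rule int_psi_mult[OF xm(1) x])
  have pxy: "integrable mu (\<lambda>t. psi (x t) * y t)" by (rule int_psi_mult[OF xm(1) y])
  have kap1: "1 \<le> kap"
  proof -
    have "Nr mu x \<le> kap" unfolding Nr_def kap_def
      using int_Mc[OF x] pxx Mc_le_tpsi by (intro integral_mono) (auto simp: mult.commute)
    then show ?thesis using Nx by simp
  qed
  have labs: "\<bar>l\<bar> \<le> 12"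
  proof -
    have i6: "integrable mu (\<lambda>t. 6 * \<bar>y t\<bar>)" using y by auto
    have b: "\<bar>psi (x t) * y t\<bar> \<le> 6 * \<bar>y t\<bar>" for t
      using psi_bound[of "x t"] by (simp add: abs_mult mult_right_mono)
    have "l \<le> (\<integral>t. 6 * \<bar>y t\<bar> \<partial>mu)" unfolding l_def
      using pxy i6 b by (intro integral_mono) (auto simp: abs_le_iff)
    moreover have "-l \<le> (\<integral>t. 6 * \<bar>y t\<bar> \<partial>mu)" unfolding l_def
      using integral_mono[OF integrable_minus[OF pxy] i6] b by (force simp: abs_le_iff)
    moreover have "(\<integral>t. 6 * \<bar>y t\<bar> \<partial>mu) = 6 * L1_norm mu y" unfolding L1_norm_def by simp
    ultimately show ?thesis using L1y by linarith
  qed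
  define s where "s = c * l / kap"
  define R where "R = E * \<bar>c\<bar> powr p"
  have sabs: "\<bar>s\<bar> \<le> 12 * \<bar>c\<bar>"
  proof -
    have "\<bar>s\<bar> = \<bar>c\<bar> * \<bar>l\<bar> / kap" using kap1 by (simp add: s_def abs_mult)
    also have "\<dots> \<le> \<bar>c\<bar> * \<bar>l\<bar>" using kap1 by (intro div_le_self_r) auto
    also have "\<dots> \<le> \<bar>c\<bar> * 12" using labs by (intro mult_left_mono) auto
    finally show ?thesis by simp
  qed
  have c26: "\<bar>c\<bar> \<le> 1/26" using c unfolding tau0_def by simp
  have R0: "0 \<le> R" unfolding R_def using E1 by simp
  have Rc: "R \<le> \<bar>c\<bar>"
  proof (cases "c = 0")
    case True then show ?thesis by (simp add: R_def)
  next
    case False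
    have "\<bar>c\<bar> powr (p-1) \<le> ((1/E) powr (1/(p-1))) powr (p-1)"
      using c p unfolding tau0_def by (intro powr_mono2) auto
    also have "\<dots> = 1/E" using p E1 by (simp add: powr_powr)
    finally have a: "\<bar>c\<bar> powr (p-1) \<le> 1/E" .
    have "R = E * (\<bar>c\<bar> * \<bar>c\<bar> powr (p-1))"
      unfolding R_def using powr_add[of "\<bar>c\<bar>" 1 "p-1"] by simp
    also have "\<dots> \<le> E * (\<bar>c\<bar> * (1/E))" using a E1 by (intro mult_left_mono) auto
    finally show ?thesis using E1 by simp
  qed
  define lam where "lam = 1 + s + R"
  have sR: "\<bar>s + R\<bar> \<le> 13 * \<bar>c\<bar>" using sabs Rc R0 by linarith
  have lam_lo: "1/2 \<le> lam" and lam_hi: "lam \<le> 3/2" using sR c26 unfolding lam_def by linarith+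
  have lam0: "0 < lam" using lam_lo by simp
  define k where "k t = (x t + c * y t) / lam - x t" for t
  have k_alt: "k t = (c * y t - (s + R) * x t) / lam" for t
    unfolding k_def lam_def using lam0 by (simp add: field_simps lam_def)
  have gi: "integrable mu (\<lambda>t. x t + c * y t)" using x y by auto
  have ki: "integrable mu k" unfolding k_def using x y by auto
  have km: "k \<in> borel_measurable mu" using ki by auto
  define Bd where "Bd t = 16 * (\<bar>c\<bar> powr p * \<bar>y t\<bar> powr p + 169 * (\<bar>c\<bar> powr p * \<bar>x t\<bar> powr p))" for t
  have kbound: "\<bar>k t\<bar> powr p \<le> Bd t" for t
  proof -
    have "\<bar>k t\<bar> = \<bar>c * y t - (s + R) * x t\<bar> / lam" unfolding k_alt using lam0 by simp
    also have "\<dots> \<le> 2 * \<bar>c * y t - (s + R) * x t\<bar>"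
      using divide_left_mono[of "1/2" lam "\<bar>c * y t - (s + R) * x t\<bar>"] lam_lo by simp
    also have "\<dots> \<le> 2 * (\<bar>c\<bar> * \<bar>y t\<bar> + \<bar>s + R\<bar> * \<bar>x t\<bar>)" using abs_triangle_ineq4[of "c * y t" "(s + R) * x t"] by (simp add: abs_mult)
    finally have kk: "\<bar>k t\<bar> \<le> 2 * (\<bar>c\<bar> * \<bar>y t\<bar> + \<bar>s + R\<bar> * \<bar>x t\<bar>)" .
    have "\<bar>k t\<bar> powr p \<le> 16 * ((\<bar>c\<bar> * \<bar>y t\<bar>) powr p + (\<bar>s + R\<bar> * \<bar>x t\<bar>) powr p)"
      by (rule pow_sum[OF p _ _ kk]) auto
    also have "(\<bar>s + R\<bar> * \<bar>x t\<bar>) powr p \<le> 169 * (\<bar>c\<bar> powr p * \<bar>x t\<bar> powr p)"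
    proof -
      have "\<bar>s + R\<bar> powr p \<le> (13 * \<bar>c\<bar>) powr p" using sR p by (intro powr_mono2) auto
      also have "\<dots> = 13 powr p * \<bar>c\<bar> powr p" by (simp add: powr_mult)
      also have "13 powr p \<le> (13::real) powr 2" using p by (intro powr_mono) auto
      then have "13 powr p * \<bar>c\<bar> powr p \<le> 169 * \<bar>c\<bar> powr p" by (intro mult_right_mono) auto
      finally have "\<bar>s + R\<bar> powr p \<le> 169 * \<bar>c\<bar> powr p" .
      then have "\<bar>s + R\<bar> powr p * \<bar>x t\<bar> powr p \<le> 169 * \<bar>c\<bar> powr p * \<bar>x t\<bar> powr p"
        by (intro mult_right_mono) auto
      then show ?thesis by (simp add: powr_mult mult.assoc)
    qed
    finally show ?thesis unfolding Bd_def by (simp add: powr_mult)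
  qed
  have Bdi: "integrable mu Bd" unfolding Bd_def using xp yp by auto
  have kpi: "integrable mu (\<lambda>t. \<bar>k t\<bar> powr p)"
  proof (rule Bochner_Integration.integrable_bound[OF Bdi])
    show "(\<lambda>t. \<bar>k t\<bar> powr p) \<in> borel_measurable mu" using km by measurable
    show "AE t in mu. norm (\<bar>k t\<bar> powr p) \<le> norm (Bd t)"
      using kbound by (auto intro: order_trans[OF _ abs_ge_self])
  qed
  have IBd: "(\<integral>t. Bd t \<partial>mu) \<le> 2720 * P * \<bar>c\<bar> powr p"
  proof -
    have "(\<integral>t. Bd t \<partial>mu) = 16 * (\<bar>c\<bar> powr p * (\<integral>t. \<bar>y t\<bar> powr p \<partial>mu) + 169 * (\<bar>c\<bar> powr p * (\<integral>t. \<bar>x t\<bar> powr p \<partial>mu)))"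
      unfolding Bd_def using xp yp by simp
    also have "\<dots> \<le> 16 * (\<bar>c\<bar> powr p * P + 169 * (\<bar>c\<bar> powr p * P))"
      using Px Py by (intro mult_left_mono add_mono) auto
    finally show ?thesis by (simp add: algebra_simps)
  qed
  have Ik: "(\<integral>t. \<bar>k t\<bar> powr p \<partial>mu) \<le> 2720 * P * \<bar>c\<bar> powr p"
    using integral_mono[OF kpi Bdi kbound] IBd by linarith
  have pk: "integrable mu (\<lambda>t. psi (x t) * k t)" by (rule int_psi_mult[OF xm(1) ki])
  have Ipk: "(\<integral>t. psi (x t) * k t \<partial>mu) = - R * kap / lam"
  proof -
    have e: "psi (x t) * k t = (c / lam) * (psi (x t) * y t) - ((s+R)/lam) * (psi (x t) * x t)" for t
      unfolding k_alt using lam0 by (simp add: field_simps)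
    have "(\<integral>t. psi (x t) * k t \<partial>mu) = (c/lam) * l - ((s+R)/lam) * kap"
      unfolding e l_def kap_def using pxx pxy by simp
    also have "\<dots> = (c * l - s * kap - R * kap) / lam" using lam0 by (simp add: field_simps)
    also have "c * l - s * kap = 0" unfolding s_def using kap1 by simp
    finally show ?thesis by simp
  qed
  have Nle: "Nr mu (\<lambda>t. (x t + c * y t) / lam) \<le> 1"
  proof -
    have "Nr mu (\<lambda>t. (x t + c * y t) / lam) \<le> (\<integral>t. Mc (x t) + psi (x t) * k t + 12 * \<bar>k t\<bar> powr p \<partial>mu)"
      unfolding Nr_def
    proof (rule integral_mono)
      show "integrable mu (\<lambda>t. Mc ((x t + c * y t) / lam))" using gi by (intro int_Mc) auto
      show "integrable mu (\<lambda>t. Mc (x t) + psi (x t) * k t + 12 * \<bar>k t\<bar> powr p)"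
        using int_Mc[OF x] pk kpi by auto
      show "Mc ((x t + c * y t) / lam) \<le> Mc (x t) + psi (x t) * k t + 12 * \<bar>k t\<bar> powr p" for t
        using Mc_taylor[OF p, of "x t" "k t"] unfolding k_def by simp
    qed
    also have "\<dots> = Nr mu x + (- R * kap / lam) + 12 * (\<integral>t. \<bar>k t\<bar> powr p \<partial>mu)"
      unfolding Nr_def using int_Mc[OF x] pk kpi Ipk by simp
    also have "\<dots> \<le> 1 - R * kap / lam + 12 * (2720 * P * \<bar>c\<bar> powr p)"
      using Nx Ik by simp
    also have "\<dots> \<le> 1"
    proof -
      have "R * (2/3) \<le> R * (kap / lam)"
      proof (rule mult_left_mono[OF _ R0])
        have "2/3 \<le> 1 / lam" using lam_hi lam0 by (simp add: le_divide_eq)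
        also have "\<dots> \<le> kap / lam" using kap1 lam0 by (intro divide_right_mono) auto
        finally show "2/3 \<le> kap / lam" .
      qed
      moreover have "12 * (2720 * P * \<bar>c\<bar> powr p) \<le> R * (2/3)"
        unfolding R_def E_def using P0 by (simp add: algebra_simps)
      moreover have "R * kap / lam = R * (kap / lam)" by simp
      ultimately show ?thesis by linarith
    qed
    finally show ?thesis .
  qed
  have "lux mu (\<lambda>t. x t + c * y t) \<le> lam" by (rule lux_le[OF gi lam0 Nle])
  then show ?thesis unfolding lam_def s_def R_def l_def kap_def .
qed

lemma L1_sum_le:
  assumes x: "integrable mu x" and y: "integrable mu y"
  shows "L1_norm mu (\<lambda>t. x t + c * y t) \<le> L1_norm mu x + \<bar>c\<bar> * L1_norm mu y"
proof -
  have "L1_norm mu (\<lambda>t. x t + c * y t) \<le> (\<integral>t. \<bar>x t\<bar> + \<bar>c\<bar> * \<bar>y t\<bar> \<partial>mu)"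
    unfolding L1_norm_def using x y
    by (intro integral_mono) (auto simp: abs_mult[symmetric] abs_triangle_ineq)
  also have "\<dots> = L1_norm mu x + \<bar>c\<bar> * L1_norm mu y"
    unfolding L1_norm_def using x y by simp
  finally show ?thesis .
qed

theorem mainTheorem4:
  fixes mu :: "'a measure" and p :: real and X :: "('a \<Rightarrow> real) set"
  assumes "prob_space mu"
    and "1 < p" and "p \<le> 2"
    and "L1_subspace mu X" and "L1_closed mu X"
    and "\<forall>f\<in>X. f \<in> borel_measurable mu \<and> integrable mu (\<lambda>x. \<bar>f x\<bar> powr p)"
    and "\<exists>A B. A > 0 \<and> B > 0 \<and> (\<forall>f\<in>X. A * L1_norm mu f \<le> Lp_norm mu p f \<and>
                                          Lp_norm mu p f \<le> B * L1_norm mu f)"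
  shows "(\<exists>C>0. \<forall>tau>0. mod_smoothness mu X tau \<le> ereal (C * tau powr p))
       \<and> (\<exists>c>0. \<forall>eps. mod_convexity mu X eps \<ge> ereal (c * eps\<^sup>2))"
proof -
  note mu = assms(1) and p = assms(2,3) and sub = assms(4) and Xp = assms(6)
  obtain B where B: "B > 0" and BX: "\<And>f. f \<in> X \<Longrightarrow> Lp_norm mu p f \<le> B * L1_norm mu f"
    using assms(7) by blast
  have Xi: "\<And>f. f \<in> X \<Longrightarrow> integrable mu f" using sub unfolding L1_subspace_def by blast
  have Xpi: "\<And>f. f \<in> X \<Longrightarrow> integrable mu (\<lambda>x. \<bar>f x\<bar> powr p)" using Xp by blast
  have Xdiff: "(\<lambda>t. f t - g t) \<in> X" if f: "f \<in> X" and g: "g \<in> X" for f g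
  proof -
    have add: "\<forall>f\<in>X. \<forall>g\<in>X. (\<lambda>x. f x + g x) \<in> X" using sub unfolding L1_subspace_def by blast
    have neg: "(\<lambda>x. (-1) * g x) \<in> X" using sub g unfolding L1_subspace_def by blast
    have "(\<lambda>x. f x + (\<lambda>x. (-1) * g x) x) \<in> X" using bspec[OF bspec[OF add f] neg] .
    then show ?thesis by simp
  qed
  define P where "P = (2*B) powr p"
  define E where "E = 65280 * P + 1"
  define tau0 where "tau0 = min (1/26) ((1/E) powr (1/(p-1)))"
  define C where "C = E + 12 / tau0 powr p + 12 / tau0 powr (p-1)"
  have P0: "0 \<le> P" unfolding P_def by simp
  have E1: "1 \<le> E" unfolding E_def using P0 by simp
  have tau0p: "0 < tau0" unfolding tau0_def using E1 by simp
  have C0: "0 < C" unfolding C_def using E1 tau0p by (simp add: add_pos_nonneg)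
  have Pbound: "(\<integral>t. \<bar>f t\<bar> powr p \<partial>mu) \<le> P" if f: "f \<in> X" and lf: "lux mu f = 1" for f
  proof -
    have L1f: "L1_norm mu f \<le> 2" by (rule L1_le_2[OF mu Xi[OF f] lux_one[OF Xi[OF f] lf]])
    have "(\<integral>t. \<bar>f t\<bar> powr p \<partial>mu) \<le> (B * L1_norm mu f) powr p"
    proof (rule Lp_bound[OF p(1)])
      show "0 \<le> (\<integral>t. \<bar>f t\<bar> powr p \<partial>mu)" by (rule integral_nonneg_AE) auto
      show "(\<integral>t. \<bar>f t\<bar> powr p \<partial>mu) powr (1/p) \<le> B * L1_norm mu f"
        using BX[OF f] unfolding Lp_norm_def by simp
    qed
    also have "\<dots> \<le> (2*B) powr p"
      using L1f B L1_nonneg[of mu f] p by (intro powr_mono2) auto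
    finally show ?thesis unfolding P_def .
  qed
  have smooth: "mod_smoothness mu X tau \<le> ereal (C * tau powr p)" if tau: "tau > 0" for tau
    unfolding mod_smoothness_def
  proof (rule Sup_least, clarify)
    fix x y assume x: "x \<in> X" and y: "y \<in> X" and lx: "lux mu x = 1" and ly: "lux mu y = 1"
    have xi: "integrable mu x" and yi: "integrable mu y" using Xi x y by auto
    have em: "(\<lambda>t. x t - tau * y t) = (\<lambda>t. x t + (-tau) * y t)" by simp
    have "(lux mu (\<lambda>t. x t + tau * y t) + lux mu (\<lambda>t. x t - tau * y t)) / 2 - 1 \<le> C * tau powr p"
    proof (cases "tau \<le> tau0")
      case True
      define l where "l = (\<integral>t. psi (x t) * y t \<partial>mu)"
      define kap where "kap = (\<integral>t. psi (x t) * x t \<partial>mu)"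
      have a: "lux mu (\<lambda>t. x t + tau * y t) \<le> 1 + tau * l / kap + E * \<bar>tau\<bar> powr p"
        unfolding l_def kap_def E_def
        by (rule smooth_core[OF mu p xi yi lx ly Xpi[OF x] Xpi[OF y] Pbound[OF x lx] Pbound[OF y ly]])
           (use True tau in \<open>simp add: E_def tau0_def\<close>)
      have b: "lux mu (\<lambda>t. x t + (-tau) * y t) \<le> 1 + (-tau) * l / kap + E * \<bar>-tau\<bar> powr p"
        unfolding l_def kap_def E_def
        by (rule smooth_core[OF mu p xi yi lx ly Xpi[OF x] Xpi[OF y] Pbound[OF x lx] Pbound[OF y ly]])
           (use True tau in \<open>simp add: E_def tau0_def\<close>)
      have Ec: "E * tau powr p \<le> C * tau powr p"
        unfolding C_def using tau0p by (intro mult_right_mono) auto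
      have b': "lux mu (\<lambda>t. x t - tau * y t) \<le> 1 - tau * l / kap + E * tau powr p"
        using b tau unfolding em by simp
      have a': "lux mu (\<lambda>t. x t + tau * y t) \<le> 1 + tau * l / kap + E * tau powr p"
        using a tau by simp
      have gen: "\<And>A Bb u Et Ct::real. A \<le> 1 + u + Et \<Longrightarrow> Bb \<le> 1 - u + Et \<Longrightarrow> Et \<le> Ct \<Longrightarrow> (A + Bb)/2 - 1 \<le> Ct"
        by (simp add: field_simps)
      show ?thesis by (rule gen[OF a' b' Ec])
    next
      case False
      have L1x: "L1_norm mu x \<le> 2" by (rule L1_le_2[OF mu xi lux_one[OF xi lx]])
      have L1y: "L1_norm mu y \<le> 2" by (rule L1_le_2[OF mu yi lux_one[OF yi ly]])
      have bnd: "lux mu (\<lambda>t. x t + c * y t) \<le> 12 + 12 * tau" if c: "\<bar>c\<bar> = tau" for c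
      proof -
        have "lux mu (\<lambda>t. x t + c * y t) \<le> 6 * L1_norm mu (\<lambda>t. x t + c * y t)"
          using xi yi by (intro lux_le_L1) auto
        also have "\<dots> \<le> 6 * (L1_norm mu x + \<bar>c\<bar> * L1_norm mu y)"
          using L1_sum_le[OF xi yi, of c] by simp
        also have "\<dots> \<le> 6 * (2 + tau * 2)" using L1x L1y c tau by (intro mult_left_mono add_mono) auto
        finally show ?thesis by simp
      qed
      have t1: "tau0 powr p \<le> tau powr p" using False tau0p p by (intro powr_mono2) auto
      have t2: "tau0 powr (p-1) \<le> tau powr (p-1)" using False tau0p p by (intro powr_mono2) auto
      have "12 \<le> 12 / tau0 powr p * tau powr p"
        using t1 powr_gt_zero[of tau0 p] tau0p by (simp add: le_divide_eq)
      moreover have "12 * tau \<le> 12 / tau0 powr (p-1) * tau powr p"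
      proof -
        have tp: "tau powr p = tau * tau powr (p-1)" using powr_add[of tau 1 "p-1"] tau by simp
        have r: "1 \<le> tau powr (p-1) / tau0 powr (p-1)" using t2 tau0p by simp
        have "12 * tau = 12 * tau * 1" by simp
        also have "\<dots> \<le> 12 * tau * (tau powr (p-1) / tau0 powr (p-1))"
          using r tau by (intro mult_left_mono) auto
        also have "\<dots> = 12 / tau0 powr (p-1) * tau powr p" unfolding tp by simp
        finally show ?thesis .
      qed
      moreover have "0 \<le> E * tau powr p" using E1 by simp
      ultimately have "12 + 12 * tau \<le> C * tau powr p" unfolding C_def by (simp add: algebra_simps)
      moreover have "lux mu (\<lambda>t. x t + tau * y t) \<le> 12 + 12 * tau" using bnd tau by simp
      moreover have "lux mu (\<lambda>t. x t - tau * y t) \<le> 12 + 12 * tau" using bnd[of "-tau"] tau by simp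
      moreover have "\<And>A Bb M Ct::real. M \<le> Ct \<Longrightarrow> A \<le> M \<Longrightarrow> Bb \<le> M \<Longrightarrow> (A + Bb)/2 - 1 \<le> Ct"
        by (simp add: field_simps)
      ultimately show ?thesis by blast
    qed
    then show "ereal ((lux mu (\<lambda>t. x t + tau * y t) + lux mu (\<lambda>t. x t - tau * y t)) / 2 - 1)
               \<le> ereal (C * tau powr p)" by simp
  qed
  define alpha where "alpha = (4 * B powr p) powr (1/(p-1))"
  define K where "K = 16 * alpha"
  define c where "c = 1 / (13824 * (1+K)\<^sup>2)"
  have K0: "0 \<le> K" unfolding K_def alpha_def by simp
  have c0: "0 < c" unfolding c_def using K0 by simp
  have conv: "ereal (c * eps\<^sup>2) \<le> mod_convexity mu X eps" for eps
    unfolding mod_convexity_def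
  proof (rule Inf_greatest)
    fix z assume "z \<in> {ereal (1 - lux mu (\<lambda>t. (x t + y t) / 2)) | x y.
      x \<in> X \<and> y \<in> X \<and> lux mu x = 1 \<and> lux mu y = 1 \<and> lux mu (\<lambda>t. x t - y t) = eps}"
    then obtain x y where z: "z = ereal (1 - lux mu (\<lambda>t. (x t + y t) / 2))"
      and x: "x \<in> X" and y: "y \<in> X" and lx: "lux mu x = 1" and ly: "lux mu y = 1"
      and le: "lux mu (\<lambda>t. x t - y t) = eps" by blast
    have dX: "(\<lambda>t. x t - y t) \<in> X" by (rule Xdiff[OF x y])
    have "(lux mu (\<lambda>t. x t - y t))\<^sup>2 / (13824 * (1+K)\<^sup>2) \<le> 1 - lux mu (\<lambda>t. (x t + y t)/2)"
      unfolding K_def alpha_def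
      by (rule convexity_core[OF mu p B Xi[OF x] Xi[OF y] lx ly Xpi[OF dX] BX[OF dX]])
    then show "ereal (c * eps\<^sup>2) \<le> z"
      using le z unfolding c_def by simp
  qed
  show ?thesis using smooth conv C0 c0 by blast
qed

end
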